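(* Let $n\ge 2$, let $M$ be an $(n-1)\times(n-1)$ circulant matrix over $R$, and let $\alpha,\beta,\gamma\in R$ with $\gamma=\beta$ or $\gamma=-\beta$. Let $B$ be the $n\times n$ bordered circulant matrix whose first row is $(\alpha,\beta,\dots,\beta)$, whose first column is $(\alpha,\gamma,\dots,\gamma)^T$, and whose lower-right $(n-1)\times(n-1)$ block is $M$. Then the linear code over $R$ generated by the rows of $[I_n\mid B]$ is a Euclidean isodual code of length $2n$ over $R$.
   Context: $R=\mathbb{Z}_4[v]/(v^2-v)$. Linear codes over $R$ are $R$-submodules of $R^N$; the Euclidean dual of $\mathcal{C}$ is $\mathcal{C}^\perp=\{\mathbf{x}:\sum_ix_ic_i=0\ \forall\mathbf{c}\in\mathcal{C}\}$. Two codes of length $N$ over $R$ are equivalent if one is obtained from the other by a permutation of coordinates followed by multiplication of some coordinates by units of $R$. A code is Euclidean isodual if it is equivalent to its Euclidean dual. A circulant matrix is one in which each row is the cyclic shift by one position to the right of the previous row. *)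

theory Defs
  imports Main "HOL-Library.Numeral_Type" "HOL-Combinatorics.Permutations"
begin

text \<open>An element Rp a b represents a + b v with a, b in Z4 (the type 4).
  Since v^2 = v: (a + b v)(c + d v) = ac + (ad + bc + bd) v.\<close>

datatype R = Rp "4" "4"

fun Rfst :: "R \<Rightarrow> 4" where "Rfst (Rp a b) = a"
fun Rsnd :: "R \<Rightarrow> 4" where "Rsnd (Rp a b) = b"

lemma R_eq_iff: "x = y \<longleftrightarrow> Rfst x = Rfst y \<and> Rsnd x = Rsnd y"
  by (cases x; cases y) auto

instantiation R :: comm_ring_1
begin
definition "0 = Rp 0 0"
definition "1 = Rp 1 0"
definition "x + y = Rp (Rfst x + Rfst y) (Rsnd x + Rsnd y)"
definition "x - y = Rp (Rfst x - Rfst y) (Rsnd x - Rsnd y)"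
definition "- x = Rp (- Rfst x) (- Rsnd x)"
definition "x * y = Rp (Rfst x * Rfst y)
     (Rfst x * Rsnd y + Rsnd x * Rfst y + Rsnd x * Rsnd y)"
instance
  by standard (auto simp: R_eq_iff zero_R_def one_R_def plus_R_def minus_R_def
      uminus_R_def times_R_def algebra_simps)
end

definition words :: "nat \<Rightarrow> (nat \<Rightarrow> R) set" where
  "words N = {x. \<forall>i\<ge>N. x i = 0}"

definition linear_code :: "nat \<Rightarrow> (nat \<Rightarrow> R) set \<Rightarrow> bool" where
  "linear_code N C \<longleftrightarrow> C \<subseteq> words N \<and> (\<lambda>_. 0) \<in> C \<and>
     (\<forall>x\<in>C. \<forall>y\<in>C. (\<lambda>i. x i + y i) \<in> C) \<and>
     (\<forall>r. \<forall>x\<in>C. (\<lambda>i. r * x i) \<in> C)"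

definition row_code :: "nat \<Rightarrow> nat \<Rightarrow> (nat \<Rightarrow> nat \<Rightarrow> R) \<Rightarrow> (nat \<Rightarrow> R) set" where
  "row_code k N G = {x. \<exists>c. x = (\<lambda>j. if j < N then (\<Sum>i<k. c i * G i j) else 0)}"

definition euclid_dual :: "nat \<Rightarrow> (nat \<Rightarrow> R) set \<Rightarrow> (nat \<Rightarrow> R) set" where
  "euclid_dual N C = {x \<in> words N. \<forall>c\<in>C. (\<Sum>i<N. x i * c i) = 0}"

definition code_equiv :: "nat \<Rightarrow> (nat \<Rightarrow> R) set \<Rightarrow> (nat \<Rightarrow> R) set \<Rightarrow> bool" where
  "code_equiv N C D \<longleftrightarrow> (\<exists>\<sigma> u. \<sigma> permutes {..<N} \<and> (\<forall>i<N. u i dvd (1::R)) \<and>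
     D = (\<lambda>c. (\<lambda>i. if i < N then u i * c (\<sigma> i) else 0)) ` C)"

definition euclid_isodual :: "nat \<Rightarrow> (nat \<Rightarrow> R) set \<Rightarrow> bool" where
  "euclid_isodual N C \<longleftrightarrow> linear_code N C \<and> code_equiv N C (euclid_dual N C)"

definition circulant :: "nat \<Rightarrow> (nat \<Rightarrow> nat \<Rightarrow> R) \<Rightarrow> bool" where
  "circulant m M \<longleftrightarrow> (\<forall>i j. Suc i < m \<and> j < m \<longrightarrow> M (Suc i) ((Suc j) mod m) = M i j)"

definition bordered :: "R \<Rightarrow> R \<Rightarrow> R \<Rightarrow> (nat \<Rightarrow> nat \<Rightarrow> R) \<Rightarrow> nat \<Rightarrow> nat \<Rightarrow> R" where
  "bordered \<alpha> \<beta> \<gamma> M i j =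
     (if i = 0 \<and> j = 0 then \<alpha> else if i = 0 then \<beta> else if j = 0 then \<gamma>
      else M (i - 1) (j - 1))"

definition ident_concat :: "nat \<Rightarrow> (nat \<Rightarrow> nat \<Rightarrow> R) \<Rightarrow> nat \<Rightarrow> nat \<Rightarrow> R" where
  "ident_concat n B i j = (if j < n then (if i = j then 1 else 0) else B i (j - n))"

end

theory Submission
  imports Defs
begin

lemma sum_split_add: "sum f {..<n+(k::nat)} = sum f {..<n} + (\<Sum>j<k. f (n+j))"
  by (induction k) (auto simp: add.commute add.left_commute)

definition Qp :: "nat \<Rightarrow> nat \<Rightarrow> nat" where
  "Qp n i = (if i \<le> 1 then i else if i < n then n+1-i else i)"

lemma Qp_lt: "i < n \<Longrightarrow> Qp n i < n"
  by (auto simp: Qp_def)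

lemma Qp_inv[simp]: "Qp n (Qp n i) = i"
  by (auto simp: Qp_def)

lemma Qp_0_iff[simp]: "Qp n i = 0 \<longleftrightarrow> i = 0"
  by (auto simp: Qp_def)

lemma Qp_bij: "bij_betw (Qp n) {..<n} {..<n}"
  by (rule bij_betw_byWitness[where f'="Qp n"]) (auto simp: Qp_lt)

lemma sum_Qp: "(\<Sum>i<n. f (Qp n i)) = (\<Sum>i<n. f i)"
  using sum.reindex_bij_betw[OF Qp_bij] by blast

lemma circ_diag:
  assumes "circulant m M"
  shows "i < m \<Longrightarrow> j < m \<Longrightarrow> M i j = M 0 ((j + m - i) mod m)"
proof (induction i arbitrary: j)
  case 0
  then show ?case by simp
next
  case (Suc i)
  define j' where "j' = (j + m - 1) mod m"
  have j'lt: "j' < m" using Suc by (simp add: j'_def)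
  have "Suc j' mod m = j"
  proof (cases "j = 0")
    case True
    then show ?thesis using Suc by (simp add: j'_def)
  next
    case False
    then have "j' = j - 1" using Suc unfolding j'_def
      by (metis Nat.add_diff_assoc2 One_nat_def Suc_leI add.commute mod_add_self1 mod_less neq0_conv less_imp_diff_less)
    then show ?thesis using Suc False by simp
  qed
  then have "M (Suc i) j = M (Suc i) (Suc j' mod m)" by simp
  also have "\<dots> = M i j'" using assms Suc j'lt unfolding circulant_def by blast
  also have "\<dots> = M 0 ((j' + m - i) mod m)" using Suc j'lt by simp
  also have "(j' + m - i) mod m = (j + m - Suc i) mod m"
  proof (cases "j = 0")
    case True
    then have "j' = m - 1" using Suc by (simp add: j'_def)
    then have "j' + m - i = (m - Suc i) + m" using Suc by simp
    then show ?thesis using True by simp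
  next
    case False
    then have "j' = j - 1" using Suc unfolding j'_def
      by (metis Nat.add_diff_assoc2 One_nat_def Suc_leI add.commute mod_add_self1 mod_less neq0_conv less_imp_diff_less)
    then show ?thesis using False Suc by simp
  qed
  finally show ?case .
qed

lemma circ_rev:
  assumes "circulant m M" "a < m" "b < m"
  shows "M ((m - a) mod m) ((m - b) mod m) = M b a"
proof -
  have m0: "m > 0" using assms by simp
  have l1: "(m - a) mod m < m" "(m - b) mod m < m" using m0 by auto
  have "M ((m - a) mod m) ((m - b) mod m) = M 0 (((m - b) mod m + m - (m - a) mod m) mod m)"
    using circ_diag[OF assms(1) l1] .
  also have "((m - b) mod m + m - (m - a) mod m) mod m = (a + m - b) mod m"
  proof -
    have e1: "m + m - b = (m - b) + m" using assms by auto
    show ?thesis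
    proof (cases "a = 0")
      case True
      have "(m + m - b) mod m = m - b" if "b > 0"
      proof -
        have "(m + m - b) mod m = ((m - b) + m) mod m" using e1 by simp
        also have "\<dots> = (m - b) mod m" by (rule mod_add_self2)
        also have "\<dots> = m - b" using that assms by simp
        finally show ?thesis .
      qed
      then show ?thesis using assms True by (cases "b = 0") (simp_all add: mod_less)
    next
      case False
      then show ?thesis using assms by (cases "b = 0") (simp_all add: mod_less add.commute)
    qed
  qed
  also have "M 0 ((a + m - b) mod m) = M b a"
    using circ_diag[OF assms(1) assms(3) assms(2)] by simp
  finally show ?thesis .
qed

theorem mainTheorem9:
  fixes n :: nat and M :: "nat \<Rightarrow> nat \<Rightarrow> R" and \<alpha> \<beta> \<gamma> :: R
  assumes "n \<ge> 2"
    and "circulant (n - 1) M"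
    and "\<gamma> = \<beta> \<or> \<gamma> = - \<beta>"
  shows "euclid_isodual (2 * n) (row_code n (2 * n) (ident_concat n (bordered \<alpha> \<beta> \<gamma> M)))"
proof -
  define B where "B = bordered \<alpha> \<beta> \<gamma> M"
  define G where "G = ident_concat n B"
  define C where "C = row_code n (2 * n) G"
  define Q where "Q = Qp n"
  define s :: R where "s = (if \<gamma> = \<beta> then 1 else -1)"
  have s2: "s * s = 1" by (simp add: s_def)
  have gs: "\<gamma> = s * \<beta>" using assms(3) by (auto simp: s_def)
  define d :: "nat \<Rightarrow> R" where "d i = (if i = 0 then s else 1)" for i
  have d2: "d i * d i = 1" for i by (simp add: d_def s2)
  have dQ: "d (Q i) = d i" for i by (simp add: d_def Q_def)
  have QQ: "Q (Q i) = i" for i by (simp add: Q_def)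
  have Qlt: "i < n \<Longrightarrow> Q i < n" for i by (simp add: Q_def Qp_lt)
  have Qlt2: "Q (i - n) < 2 * n" if "i < 2 * n" "\<not> i < n" for i
  proof -
    have "i - n < n" using that by simp
    then have "Q (i - n) < n" by (rule Qlt)
    then show ?thesis by simp
  qed
  have sumQ: "(\<Sum>i<n. f (Q i)) = (\<Sum>i<n. f i)" for f :: "nat \<Rightarrow> R"
    unfolding Q_def by (rule sum_Qp)
  have keyB: "d a * d b * B (Q a) (Q b) = B b a" if "a < n" "b < n" for a b
  proof -
    have Qm: "Q x - 1 = ((n - 1) - (x - 1)) mod (n - 1)" if "1 \<le> x" "x < n" for x
      using that by (cases "x = 1") (auto simp: Q_def Qp_def)
    have Q1: "1 \<le> x \<Longrightarrow> x < n \<Longrightarrow> 1 \<le> Q x" for x by (auto simp: Q_def Qp_def)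
    show ?thesis
    proof (cases "a = 0")
      case True
      then show ?thesis using that
        by (cases "b = 0") (auto simp: B_def bordered_def d_def Q_def gs s2 mult.assoc[symmetric])
    next
      case a: False
      show ?thesis
      proof (cases "b = 0")
        case True
        then show ?thesis using that a
          by (auto simp: B_def bordered_def d_def Q_def gs s2 mult.assoc[symmetric])
      next
        case b: False
        have "B (Q a) (Q b) = M (Q a - 1) (Q b - 1)"
          using a b Q1[of a] Q1[of b] that by (auto simp: B_def bordered_def)
        also have "\<dots> = M (b - 1) (a - 1)"
          using Qm[of a] Qm[of b] a b that circ_rev[OF assms(2), of "a - 1" "b - 1"] by simp
        also have "\<dots> = B b a" using a b by (simp add: B_def bordered_def)
        finally show ?thesis using a b by (simp add: d_def)
      qed
    qed
  qed
  have sym2: "d a * B b (Q a) = d b * B a (Q b)" if "a < n" "b < n" for a b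
  proof -
    have "B b (Q a) = d (Q a) * d b * B (Q (Q a)) (Q b)"
      using keyB[of "Q a" b] that Qlt by simp
    then have "d a * B b (Q a) = (d a * d a) * d b * B a (Q b)"
      by (simp add: dQ QQ mult.assoc)
    then show ?thesis by (simp add: d2)
  qed
  define F where "F c = (\<lambda>j. if j < 2 * n then (\<Sum>i<n. c i * G i j) else 0)" for c :: "nat \<Rightarrow> R"
  have C_eq: "C = range F" unfolding C_def row_code_def F_def by auto
  have F_low: "j < n \<Longrightarrow> F c j = c j" for c j
  proof -
    assume j: "j < n"
    have "(\<Sum>i<n. c i * G i j) = (\<Sum>i<n. if i = j then c i else 0)"
      by (rule sum.cong) (auto simp: G_def ident_concat_def j)
    then show ?thesis using j by (simp add: F_def)
  qed
  have F_high: "j < n \<Longrightarrow> F c (n + j) = (\<Sum>i<n. c i * B i j)" for c j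
    by (simp add: F_def G_def ident_concat_def)
  have F_out: "2 * n \<le> j \<Longrightarrow> F c j = 0" for c j by (simp add: F_def)
  define \<sigma> where "\<sigma> j = (if j < n then n + Q j else if j < 2 * n then Q (j - n) else j)" for j
  define u where "u j = (if j < n then - d j else d (j - n))" for j
  define \<Phi> where "\<Phi> x = (\<lambda>i. if i < 2 * n then u i * x (\<sigma> i) else 0)" for x :: "nat \<Rightarrow> R"
  have \<sigma>perm: "\<sigma> permutes {..<2 * n}"
  proof (rule bij_imp_permutes)
    show "bij_betw \<sigma> {..<2 * n} {..<2 * n}"
      by (rule bij_betw_byWitness[where f'=\<sigma>]) (auto simp: \<sigma>_def QQ Qlt Qlt2)
  qed (simp add: \<sigma>_def)
  have units: "u i dvd 1" for i
  proof -
    have "u i * u i = 1" by (simp add: u_def d2)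
    then show ?thesis by (metis dvdI)
  qed
  have Phi_low: "j < n \<Longrightarrow> \<Phi> (F c) j = - d j * (\<Sum>i<n. c i * B i (Q j))" for c j
    using F_high[of "Q j" c] Qlt[of j] by (simp add: \<Phi>_def u_def \<sigma>_def)
  have Phi_high: "j < n \<Longrightarrow> \<Phi> (F c) (n + j) = d j * c (Q j)" for c j
    using F_low[of "Q j" c] Qlt[of j] by (simp add: \<Phi>_def u_def \<sigma>_def)
  have pairing: "(\<Sum>k<2 * n. y k * F e k) = (\<Sum>k<n. y k * e k) + (\<Sum>j<n. y (n + j) * (\<Sum>i<n. e i * B i j))"
    for y e
    using sum_split_add[of "\<lambda>k. y k * F e k" n n] by (simp add: mult_2 F_low F_high)
  have dual_eq: "euclid_dual (2 * n) C = \<Phi> ` C"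
  proof
    show "\<Phi> ` C \<subseteq> euclid_dual (2 * n) C"
    proof
      fix y assume "y \<in> \<Phi> ` C"
      then obtain c where yc: "y = \<Phi> (F c)" using C_eq by auto
      have "y \<in> words (2 * n)" by (simp add: yc \<Phi>_def words_def)
      moreover have "(\<Sum>k<2 * n. y k * x k) = 0" if "x \<in> C" for x
      proof -
        obtain e where xe: "x = F e" using \<open>x \<in> C\<close> C_eq by auto
        define T where "T = (\<Sum>l<n. \<Sum>i<n. c l * e i * (d i * B l (Q i)))"
        have p1: "(\<Sum>k<n. y k * e k) = - T"
        proof -
          have "(\<Sum>k<n. y k * e k) = (\<Sum>k<n. - (\<Sum>i<n. d k * c i * e k * B i (Q k)))"
          proof (rule sum.cong)
            fix k assume k: "k \<in> {..<n}"
            have "y k * e k = - ((d k * e k) * (\<Sum>i<n. c i * B i (Q k)))"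
              using Phi_low k by (simp add: yc mult_ac)
            also have "\<dots> = - (\<Sum>i<n. (d k * e k) * (c i * B i (Q k)))"
              by (simp only: sum_distrib_left)
            also have "\<dots> = - (\<Sum>i<n. d k * c i * e k * B i (Q k))"
              by (simp add: mult_ac)
            finally show "y k * e k = - (\<Sum>i<n. d k * c i * e k * B i (Q k))" .
          qed simp
          also have "\<dots> = - (\<Sum>i<n. \<Sum>k<n. d k * c i * e k * B i (Q k))"
            by (simp only: sum_negf, subst sum.swap, rule refl)
          also have "\<dots> = - T" unfolding T_def
            by (simp add: mult_ac)
          finally show ?thesis .
        qed
        have p2: "(\<Sum>j<n. y (n + j) * (\<Sum>i<n. e i * B i j)) = T"
        proof -
          have "(\<Sum>j<n. y (n + j) * (\<Sum>i<n. e i * B i j)) = (\<Sum>j<n. d j * c (Q j) * (\<Sum>i<n. e i * B i j))"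
            by (rule sum.cong) (auto simp: yc Phi_high)
          also have "\<dots> = (\<Sum>l<n. d (Q l) * c (Q (Q l)) * (\<Sum>i<n. e i * B i (Q l)))"
            using sumQ[of "\<lambda>j. d j * c (Q j) * (\<Sum>i<n. e i * B i j)"] by simp
          also have "\<dots> = (\<Sum>l<n. \<Sum>i<n. c l * e i * (d l * B i (Q l)))"
            by (rule sum.cong) (simp_all add: dQ QQ sum_distrib_left mult_ac)
          also have "\<dots> = T" unfolding T_def
            by (auto intro!: sum.cong simp: sym2)
          finally show ?thesis .
        qed
        show ?thesis unfolding xe pairing p1 p2 by simp
      qed
      ultimately show "y \<in> euclid_dual (2 * n) C" by (simp add: euclid_dual_def)
    qed
  next
    show "euclid_dual (2 * n) C \<subseteq> \<Phi> ` C"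
    proof
      fix y assume yd: "y \<in> euclid_dual (2 * n) C"
      have yw: "j \<ge> 2 * n \<Longrightarrow> y j = 0" for j using yd by (simp add: euclid_dual_def words_def)
      have rel: "y j = - (\<Sum>k<n. y (n + k) * B j k)" if "j < n" for j
      proof -
        define \<delta> where "\<delta> i = (if i = j then 1 else (0::R))" for i
        have "F \<delta> \<in> C" using C_eq by auto
        then have "(\<Sum>k<2 * n. y k * F \<delta> k) = 0" using yd by (simp add: euclid_dual_def)
        then have "y j + (\<Sum>k<n. y (n + k) * B j k) = 0"
        proof -
          have inner: "(\<Sum>i<n. \<delta> i * B i k) = B j k" for k
          proof -
            have "(\<Sum>i<n. \<delta> i * B i k) = (\<Sum>i<n. if i = j then B i k else 0)"
              by (rule sum.cong) (simp_all add: \<delta>_def)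
            then show ?thesis using that by simp
          qed
          have outer: "(\<Sum>k<n. y k * \<delta> k) = y j"
          proof -
            have "(\<Sum>k<n. y k * \<delta> k) = (\<Sum>k<n. if k = j then y k else 0)"
              by (rule sum.cong) (simp_all add: \<delta>_def)
            then show ?thesis using that by simp
          qed
          show ?thesis using \<open>(\<Sum>k<2 * n. y k * F \<delta> k) = 0\<close>
            unfolding pairing inner outer .
        qed
        then show ?thesis by (simp add: eq_neg_iff_add_eq_0)
      qed
      define c where "c l = d l * y (n + Q l)" for l
      have "y = \<Phi> (F c)"
      proof
        fix j
        show "y j = \<Phi> (F c) j"
        proof (cases "j < n")
          case True
          have "\<Phi> (F c) j = - d j * (\<Sum>i<n. d i * y (n + Q i) * B i (Q j))"
            using True by (simp add: Phi_low c_def)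
          also have "(\<Sum>i<n. d i * y (n + Q i) * B i (Q j)) = (\<Sum>k<n. d (Q k) * y (n + Q (Q k)) * B (Q k) (Q j))"
            using sumQ[of "\<lambda>i. d i * y (n + Q i) * B i (Q j)"] by simp
          also have "\<dots> = (\<Sum>k<n. d j * (y (n + k) * B j k))"
          proof (rule sum.cong)
            fix k assume "k \<in> {..<n}"
            then have "B j k = d k * d j * B (Q k) (Q j)" using keyB[of k j] True by simp
            then have "d j * (y (n + k) * B j k) = (d j * d j) * (d k * y (n + k) * B (Q k) (Q j))"
              by (simp add: mult_ac)
            then show "d (Q k) * y (n + Q (Q k)) * B (Q k) (Q j) = d j * (y (n + k) * B j k)"
              by (simp add: d2 dQ QQ)
          qed simp
          also have "\<dots> = d j * (\<Sum>k<n. y (n + k) * B j k)" by (simp add: sum_distrib_left)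
          finally have "\<Phi> (F c) j = - ((d j * d j) * (\<Sum>k<n. y (n + k) * B j k))"
            by (simp add: mult_ac)
          then show ?thesis using rel[OF True] by (simp add: d2)
        next
          case False
          show ?thesis
          proof (cases "j < 2 * n")
            case True
            then obtain k where k: "j = n + k" "k < n" using False
              by (metis add_diff_inverse_nat mult_2 nat_add_left_cancel_less)
            have "\<Phi> (F c) j = (d k * d k) * y (n + k)"
              using k by (simp add: Phi_high c_def dQ QQ mult_ac)
            then show ?thesis using k by (simp add: d2)
          next
            case False
            then show ?thesis by (simp add: yw \<Phi>_def)
          qed
        qed
      qed
      then show "y \<in> \<Phi> ` C" using C_eq by auto
    qed
  qed
  have lin: "linear_code (2 * n) C"
    unfolding linear_code_def
  proof (intro conjI ballI allI)
    show "C \<subseteq> words (2 * n)" by (auto simp: C_eq F_def words_def)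
    show "(\<lambda>_. 0) \<in> C" unfolding C_eq
      by (rule range_eqI[where x="\<lambda>_. 0"]) (auto simp: F_def)
    fix x y assume "x \<in> C" "y \<in> C"
    then obtain a b where "x = F a" "y = F b" using C_eq by auto
    then show "(\<lambda>i. x i + y i) \<in> C" unfolding C_eq
      by (intro range_eqI[where x="\<lambda>i. a i + b i"]) (auto simp: F_def distrib_right sum.distrib)
  next
    fix r x assume "x \<in> C"
    then obtain a where "x = F a" using C_eq by auto
    then show "(\<lambda>i. r * x i) \<in> C" unfolding C_eq
      by (intro range_eqI[where x="\<lambda>i. r * a i"]) (auto simp: F_def sum_distrib_left mult.assoc)
  qed
  have "code_equiv (2 * n) C (euclid_dual (2 * n) C)"
    unfolding code_equiv_def dual_eq \<Phi>_def
    by (rule exI[of _ \<sigma>], rule exI[of _ u]) (simp add: \<sigma>perm units)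
  then show ?thesis using lin unfolding euclid_isodual_def C_def G_def B_def by simp
qed

end
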